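(* Let $P$ be a finite $(3+1)$-free poset, $C,D$ chains of $P$, and $H$ a ladder of $(C,D)$. Then (i) $H$, as an induced subgraph of $\mathrm{inc}_P(C,D)$, is either a 4-cycle or a path; and (ii) $|H\cap C|$ and $|H\cap D|$ differ by at most 1.
   Context: $a\sim_Pb$ means $a,b$ incomparable or equal. For chains $C,D$ of $P$ (not necessarily disjoint), $\mathrm{inc}_P(C,D)$ is the bipartite graph with partite sets $C$ and $D$ (taken as a disjoint union) whose edges are pairs $c\in C$, $d\in D$ with $c\sim_Pd$. A ladder of $(C,D)$ is a connected component of $\mathrm{inc}_P(C,D)$, identified with its vertex set in $C\sqcup D$. $(3+1)$-free: no induced 3-chain plus disjoint point. *)

theory Defs
  imports Main
begin

definition poset_on :: "'a set \<Rightarrow> ('a \<Rightarrow> 'a \<Rightarrow> bool) \<Rightarrow> bool" where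
  "poset_on P le \<longleftrightarrow>
     (\<forall>x\<in>P. le x x) \<and>
     (\<forall>x\<in>P. \<forall>y\<in>P. le x y \<and> le y x \<longrightarrow> x = y) \<and>
     (\<forall>x\<in>P. \<forall>y\<in>P. \<forall>z\<in>P. le x y \<and> le y z \<longrightarrow> le x z)"

definition incomparable :: "('a \<Rightarrow> 'a \<Rightarrow> bool) \<Rightarrow> 'a \<Rightarrow> 'a \<Rightarrow> bool" where
  "incomparable le a b \<longleftrightarrow> \<not> le a b \<and> \<not> le b a"

definition sim :: "('a \<Rightarrow> 'a \<Rightarrow> bool) \<Rightarrow> 'a \<Rightarrow> 'a \<Rightarrow> bool" where
  "sim le a b \<longleftrightarrow> a = b \<or> incomparable le a b"

definition chain_of :: "'a set \<Rightarrow> ('a \<Rightarrow> 'a \<Rightarrow> bool) \<Rightarrow> 'a set \<Rightarrow> bool" where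
  "chain_of P le C \<longleftrightarrow> C \<subseteq> P \<and> (\<forall>x\<in>C. \<forall>y\<in>C. le x y \<or> le y x)"

definition free_3_1 :: "'a set \<Rightarrow> ('a \<Rightarrow> 'a \<Rightarrow> bool) \<Rightarrow> bool" where
  "free_3_1 P le \<longleftrightarrow>
     \<not> (\<exists>a\<in>P. \<exists>b\<in>P. \<exists>c\<in>P. \<exists>d\<in>P.
          le a b \<and> a \<noteq> b \<and> le b c \<and> b \<noteq> c \<and>
          incomparable le d a \<and> incomparable le d b \<and> incomparable le d c)"

text \<open>The bipartite graph inc_P(C,D): vertex set is the disjoint union C \<sqinter> D (as Inl/Inr).\<close>
definition inc_vertices :: "'a set \<Rightarrow> 'a set \<Rightarrow> ('a + 'a) set" where
  "inc_vertices C D = Inl ` C \<union> Inr ` D"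

definition inc_edge :: "('a \<Rightarrow> 'a \<Rightarrow> bool) \<Rightarrow> 'a set \<Rightarrow> 'a set \<Rightarrow> ('a + 'a) \<Rightarrow> ('a + 'a) \<Rightarrow> bool" where
  "inc_edge le C D u v \<longleftrightarrow>
     (\<exists>c\<in>C. \<exists>d\<in>D. sim le c d \<and>
        ((u = Inl c \<and> v = Inr d) \<or> (u = Inr d \<and> v = Inl c)))"

definition ladder :: "('a \<Rightarrow> 'a \<Rightarrow> bool) \<Rightarrow> 'a set \<Rightarrow> 'a set \<Rightarrow> ('a + 'a) set \<Rightarrow> bool" where
  "ladder le C D H \<longleftrightarrow>
     (\<exists>v\<in>inc_vertices C D. H = {w. (v, w) \<in> {(x, y). inc_edge le C D x y}\<^sup>*})"

definition is_path_graph :: "'v set \<Rightarrow> ('v \<Rightarrow> 'v \<Rightarrow> bool) \<Rightarrow> bool" where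
  "is_path_graph H E \<longleftrightarrow>
     (\<exists>xs. xs \<noteq> [] \<and> distinct xs \<and> set xs = H \<and>
        (\<forall>i<length xs. \<forall>j<length xs. E (xs ! i) (xs ! j) \<longleftrightarrow> (i = j + 1 \<or> j = i + 1)))"

definition is_4cycle :: "'v set \<Rightarrow> ('v \<Rightarrow> 'v \<Rightarrow> bool) \<Rightarrow> bool" where
  "is_4cycle H E \<longleftrightarrow>
     (\<exists>xs. length xs = 4 \<and> distinct xs \<and> set xs = H \<and>
        (\<forall>i<4. \<forall>j<4. E (xs ! i) (xs ! j) \<longleftrightarrow> (j = (i + 1) mod 4 \<or> i = (j + 1) mod 4)))"

end

theory Submission
  imports Defs
begin


lemma closed_reach:
  assumes "\<And>x y. x \<in> K \<Longrightarrow> E x y \<Longrightarrow> y \<in> K" "a \<in> K"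
    "(a,b) \<in> {(x,y). E x y}\<^sup>*"
  shows "b \<in> K"
  using assms(3,2) by (induction rule: rtrancl_induct) (auto intro: assms(1))

lemma reach_sym:
  assumes sym: "\<And>x y. E x y \<Longrightarrow> E y x" and "(a,b) \<in> {(x,y). E x y}\<^sup>*"
  shows "(b,a) \<in> {(x,y). E x y}\<^sup>*"
  using assms(2)
proof (induction rule: rtrancl_induct)
  case base then show ?case by simp
next
  case (step y z)
  have "E y z" using step(2) by simp
  then have "(z, y) \<in> {(x,y). E x y}" using sym[of y z] by simp
  then show ?case using step(3) by (rule converse_rtrancl_into_rtrancl)
qed

lemma path_or_cycle:
  fixes E :: "'v \<Rightarrow> 'v \<Rightarrow> bool"
  assumes fin: "finite H"
  and H: "H = {w. (v,w) \<in> {(x,y). E x y}\<^sup>*}"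
  and sym: "\<And>x y. E x y \<Longrightarrow> E y x"
  and irr: "\<And>x. \<not> E x x"
  and deg: "\<And>x a b c. E x a \<Longrightarrow> E x b \<Longrightarrow> E x c \<Longrightarrow> a = b \<or> a = c \<or> b = c"
  shows "\<exists>xs. xs \<noteq> [] \<and> distinct xs \<and> set xs = H \<and>
     (\<forall>i. Suc i < length xs \<longrightarrow> E (xs!i) (xs!Suc i)) \<and>
     ((\<forall>i<length xs. \<forall>j<length xs. E (xs!i) (xs!j) \<longleftrightarrow> (i = j+1 \<or> j = i+1)) \<or>
      (length xs \<ge> 3 \<and> (\<forall>i<length xs. \<forall>j<length xs. E (xs!i) (xs!j) \<longleftrightarrow>
         (i = j+1 \<or> j = i+1 \<or> (i = 0 \<and> j = length xs - 1) \<or> (j = 0 \<and> i = length xs - 1)))))"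
proof -
  define R where "R = {(x,y). E x y}"
  have Hcl: "y \<in> H" if "x \<in> H" "E x y" for x y
    using that unfolding H by (auto intro: rtrancl_into_rtrancl)
  define S where "S = {xs. xs \<noteq> [] \<and> distinct xs \<and> set xs \<subseteq> H \<and> (\<forall>i. Suc i < length xs \<longrightarrow> E (xs!i) (xs!Suc i))}"
  have finS: "finite S"
    by (rule finite_subset[OF _ finite_subset_distinct[OF fin]]) (auto simp: S_def)
  have vH: "v \<in> H" unfolding H by simp
  have "[v] \<in> S" using vH by (simp add: S_def)
  then have Sne: "S \<noteq> {}" by blast
  define m where "m = Max (length ` S)"
  have "m \<in> length ` S" unfolding m_def using finS Sne by (intro Max_in) auto
  then obtain xs where xsS: "xs \<in> S" and lm: "length xs = m" by auto
  have maxl: "length ys \<le> length xs" if "ys \<in> S" for ys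
    using that finS lm unfolding m_def by (metis Max_ge finite_imageI imageI)
  define n where "n = length xs"
  have ne: "xs \<noteq> []" and dist: "distinct xs" and sub: "set xs \<subseteq> H"
    and step: "\<And>i. Suc i < n \<Longrightarrow> E (xs!i) (xs!Suc i)"
    using xsS by (auto simp: S_def n_def)
  have npos: "n > 0" using ne by (simp add: n_def)
  have nthH: "xs!i \<in> H" if "i < n" for i using sub that n_def by auto
  have eqi: "xs!i = xs!j \<longleftrightarrow> i = j" if "i < n" "j < n" for i j
    using nth_eq_iff_index_eq[OF dist] that n_def by auto
  have ext_last: "y \<in> set xs" if "E (xs!(n-1)) y" for y
  proof (rule ccontr)
    assume ny: "y \<notin> set xs"
    have yH: "y \<in> H" using Hcl[OF nthH that] npos by auto
    have "xs @ [y] \<in> S"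
      unfolding S_def
    proof (intro CollectI conjI allI impI)
      fix i assume i: "Suc i < length (xs @ [y])"
      show "E ((xs @ [y]) ! i) ((xs @ [y]) ! Suc i)"
      proof (cases "Suc i < n")
        case True then show ?thesis using step[OF True] by (simp add: nth_append n_def)
      next
        case False then have "i = n - 1" using i n_def by auto
        then show ?thesis using that npos by (simp add: nth_append n_def)
      qed
    qed (use dist ny sub yH in \<open>simp_all\<close>)
    then show False using maxl by fastforce
  qed
  have ext_first: "y \<in> set xs" if "E (xs!0) y" for y
  proof (rule ccontr)
    assume ny: "y \<notin> set xs"
    have yH: "y \<in> H" using Hcl[OF nthH that] npos by auto
    have "y # xs \<in> S"
      unfolding S_def
    proof (intro CollectI conjI allI impI)
      fix i assume i: "Suc i < length (y # xs)"
      show "E ((y # xs) ! i) ((y # xs) ! Suc i)"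
      proof (cases i)
        case 0 then show ?thesis using sym[OF that] by simp
      next
        case (Suc k) then show ?thesis using step[of k] i n_def by simp
      qed
    qed (use dist ny sub yH in \<open>simp_all\<close>)
    then show False using maxl by fastforce
  qed
  have internal: "y = xs!(i-1) \<or> y = xs!(i+1)" if "0 < i" "i < n - 1" "E (xs!i) y" for i y
  proof -
    have a: "E (xs!i) (xs!(i-1))" using sym[OF step[of "i-1"]] that by auto
    have b: "E (xs!i) (xs!(i+1))" using step[of i] that by auto
    have "xs!(i-1) \<noteq> xs!(i+1)" using eqi[of "i-1" "i+1"] that by auto
    then show ?thesis using deg[OF a b that(3)] by auto
  qed
  have chord: "i = 0 \<and> j = n - 1" if "i < j" "j < n" "E (xs!i) (xs!j)" "j \<noteq> i+1" for i j
  proof -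
    have i0: "i = 0"
    proof (rule ccontr)
      assume "i \<noteq> 0"
      then have "xs!j = xs!(i-1) \<or> xs!j = xs!(i+1)" using internal[OF _ _ that(3)] that by auto
      moreover have "i - 1 < n" "i + 1 < n" using that \<open>i \<noteq> 0\<close> by auto
      ultimately have "j = i - 1 \<or> j = i + 1" using eqi that(2) by blast
      then show False using that by auto
    qed
    moreover have "j = n - 1"
    proof (rule ccontr)
      assume "j \<noteq> n - 1"
      then have "xs!i = xs!(j-1) \<or> xs!i = xs!(j+1)" using internal[OF _ _ sym[OF that(3)]] that by auto
      moreover have "j - 1 < n" "j + 1 < n" using that \<open>j \<noteq> n - 1\<close> by auto
      ultimately have "i = j - 1 \<or> i = j + 1" using eqi that by (metis less_trans)
      then show False using that i0 by auto
    qed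
    ultimately show ?thesis by simp
  qed
  have adj1: "i = j+1 \<or> j = i+1 \<or> (i = 0 \<and> j = n - 1) \<or> (j = 0 \<and> i = n - 1)"
    if "i < n" "j < n" "E (xs!i) (xs!j)" for i j
  proof -
    have "i \<noteq> j" using irr that by auto
    then consider "i < j" | "j < i" by linarith
    then show ?thesis
    proof cases
      case 1 then show ?thesis using chord[OF 1 that(2,3)] by auto
    next
      case 2 then show ?thesis using chord[OF 2 that(1) sym[OF that(3)]] by auto
    qed
  qed
  have adj2: "E (xs!i) (xs!j)" if "i < n" "j < n" "i = j+1 \<or> j = i+1" for i j
    using that(3)
  proof
    assume "i = j + 1" then show ?thesis using sym[OF step[of j]] that by simp
  next
    assume "j = i + 1" then show ?thesis using step[of i] that by simp
  qed
  have clos: "y \<in> set xs" if xin: "x \<in> set xs" and "E x y" for x y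
  proof -
    obtain i where i0: "i < length xs" "x = xs!i" using xin by (auto simp: in_set_conv_nth)
    then have i: "i < n" "x = xs!i" by (simp_all add: n_def)
    show ?thesis
    proof (cases "i = 0")
      case True then show ?thesis using ext_first that i by simp
    next
      case False
      show ?thesis
      proof (cases "i = n - 1")
        case True then show ?thesis using ext_last that i by simp
      next
        case False': False
        then have "y = xs!(i-1) \<or> y = xs!(i+1)" using internal[of i y] False i that by auto
        then show ?thesis using i False' by (auto simp: n_def)
      qed
    qed
  qed
  have setH: "set xs = H"
  proof
    show "set xs \<subseteq> H" by (rule sub)
  next
    have "(v, xs!0) \<in> {(x,y). E x y}\<^sup>*" using nthH[OF npos] unfolding H by simp
    then have "(xs!0, v) \<in> {(x,y). E x y}\<^sup>*" using reach_sym[of E] sym by blast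
    then have "v \<in> set xs" using closed_reach[of "set xs" E "xs!0" v] clos npos n_def by auto
    then show "H \<subseteq> set xs" unfolding H using closed_reach[of "set xs" E v] clos by blast
  qed
  show ?thesis
  proof (cases "n \<ge> 3 \<and> E (xs!0) (xs!(n-1))")
    case True
    have "E (xs!i) (xs!j) \<longleftrightarrow> (i = j+1 \<or> j = i+1 \<or> (i = 0 \<and> j = n - 1) \<or> (j = 0 \<and> i = n - 1))"
      if "i < n" "j < n" for i j
      using adj1[OF that] adj2[OF that] True sym[of "xs!0" "xs!(n-1)"] that by auto
    then have "\<forall>i<length xs. \<forall>j<length xs. E (xs!i) (xs!j) \<longleftrightarrow> (i = j+1 \<or> j = i+1 \<or> (i = 0 \<and> j = length xs - 1) \<or> (j = 0 \<and> i = length xs - 1))" by (simp add: n_def)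
    moreover have "\<forall>i. Suc i < length xs \<longrightarrow> E (xs!i) (xs!Suc i)" using step by (simp add: n_def)
    moreover have "length xs \<ge> 3" using True by (simp add: n_def)
    ultimately show ?thesis using ne dist setH by (intro exI[of _ xs] conjI disjI2) assumption+
  next
    case False
    have "E (xs!i) (xs!j) \<longleftrightarrow> (i = j+1 \<or> j = i+1)"
      if "i < n" "j < n" for i j
    proof
      assume e: "E (xs!i) (xs!j)"
      show "i = j+1 \<or> j = i+1"
      proof (cases "n \<ge> 3")
        case True then show ?thesis using adj1[OF that e] False e sym[OF e] by auto
      next
        case False
        have "i \<noteq> j" using irr e by auto
        then show ?thesis using adj1[OF that e] that False by auto
      qed
    qed (use adj2 that in blast)
    then have "\<forall>i<length xs. \<forall>j<length xs. E (xs!i) (xs!j) \<longleftrightarrow> (i = j+1 \<or> j = i+1)" by (simp add: n_def)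
    moreover have "\<forall>i. Suc i < length xs \<longrightarrow> E (xs!i) (xs!Suc i)" using step by (simp add: n_def)
    ultimately show ?thesis using ne dist setH by (intro exI[of _ xs] conjI disjI1) assumption+
  qed
qed



lemma inc_edge_Inl: "inc_edge le C D (Inl c) y \<longleftrightarrow> (\<exists>d. y = Inr d \<and> c \<in> C \<and> d \<in> D \<and> sim le c d)"
  unfolding inc_edge_def by auto

lemma inc_edge_Inr: "inc_edge le C D (Inr d) y \<longleftrightarrow> (\<exists>c. y = Inl c \<and> c \<in> C \<and> d \<in> D \<and> sim le c d)"
  unfolding inc_edge_def by auto

lemma inc_edge_sym: "inc_edge le C D x y \<Longrightarrow> inc_edge le C D y x"
  unfolding inc_edge_def by auto

lemma inc_edge_irr: "\<not> inc_edge le C D x x"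
  unfolding inc_edge_def by auto

lemma inc_edge_isl: "inc_edge le C D x y \<Longrightarrow> isl x \<noteq> isl y"
  unfolding inc_edge_def by auto

lemma sim_commute: "sim le a b = sim le b a"
  unfolding sim_def incomparable_def by auto

lemma sim_chain:
  assumes "chain_of P le X" "a \<in> X" "b \<in> X" "a \<noteq> b" "sim le w a" "sim le w b"
  shows "incomparable le w a"
  using assms unfolding chain_of_def sim_def incomparable_def by metis

lemma three_bad:
  assumes po: "poset_on P le" and fr: "free_3_1 P le" and ch: "chain_of P le X"
    and w: "w \<in> P" and abc: "a \<in> X" "b \<in> X" "c \<in> X" "a \<noteq> b" "a \<noteq> c" "b \<noteq> c"
    and s: "sim le w a" "sim le w b" "sim le w c"
  shows False
proof -
  have ia: "incomparable le w a" using sim_chain[OF ch abc(1,2,4) s(1,2)] .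
  have ib: "incomparable le w b" using sim_chain[OF ch abc(2,1) _ s(2,1)] abc by auto
  have ic: "incomparable le w c" using sim_chain[OF ch abc(3,1) _ s(3,1)] abc by auto
  have XP: "X \<subseteq> P" using ch by (simp add: chain_of_def)
  have key: False if "x \<in> X" "y \<in> X" "z \<in> X" "le x y" "le y z" "x \<noteq> y" "y \<noteq> z"
     "incomparable le w x" "incomparable le w y" "incomparable le w z" for x y z
    using fr that XP w unfolding free_3_1_def by blast
  have c1: "le a b \<or> le b a" "le b c \<or> le c b" "le a c \<or> le c a"
    using ch abc unfolding chain_of_def by auto
  show False
    using c1 key[of a b c] key[of a c b] key[of c a b] key[of b a c] key[of b c a] key[of c b a]
      abc ia ib ic by blast
qed

lemma inc_deg:
  assumes po: "poset_on P le" and fr: "free_3_1 P le"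
    and cC: "chain_of P le C" and cD: "chain_of P le D"
    and e: "inc_edge le C D x a" "inc_edge le C D x b" "inc_edge le C D x c"
  shows "a = b \<or> a = c \<or> b = c"
proof (cases x)
  case (Inl w)
  then obtain a' b' c' where "a = Inr a'" "b = Inr b'" "c = Inr c'" "a' \<in> D" "b' \<in> D" "c' \<in> D"
    "w \<in> C" "sim le w a'" "sim le w b'" "sim le w c'"
    using e by (auto simp: inc_edge_Inl)
  moreover have "w \<in> P" using cC \<open>w \<in> C\<close> by (auto simp: chain_of_def)
  ultimately show ?thesis using three_bad[OF po fr cD, of w a' b' c'] by auto
next
  case (Inr w)
  then obtain a' b' c' where "a = Inl a'" "b = Inl b'" "c = Inl c'" "a' \<in> C" "b' \<in> C" "c' \<in> C"
    "w \<in> D" "sim le w a'" "sim le w b'" "sim le w c'"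
    using e by (auto simp: inc_edge_Inr sim_commute)
  moreover have "w \<in> P" using cD \<open>w \<in> D\<close> by (auto simp: chain_of_def)
  ultimately show ?thesis using three_bad[OF po fr cC, of w a' b' c'] by auto
qed

lemma chain_min:
  assumes "finite A" "A \<noteq> {}" "A \<subseteq> P" "poset_on P le" "\<forall>x\<in>A. \<forall>y\<in>A. le x y \<or> le y x"
  shows "\<exists>m\<in>A. \<forall>y\<in>A. le m y"
  using assms
proof (induction A rule: finite_ne_induct)
  case (singleton x) then show ?case by (auto simp: poset_on_def)
next
  case (insert x F)
  then obtain m where m: "m \<in> F" "\<forall>y\<in>F. le m y" by auto
  show ?case
  proof (cases "le x m")
    case True
    have "\<forall>y\<in>insert x F. le x y"
      using True m insert.prems unfolding poset_on_def by (metis insertE insert_subset subsetD)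
    then show ?thesis by auto
  next
    case False
    then have "le m x" using insert.prems m by auto
    then show ?thesis using m by auto
  qed
qed

lemma alt_count_aux:
  "(\<forall>i. Suc i < length xs \<longrightarrow> isl (xs!i) \<noteq> isl (xs!Suc i)) \<Longrightarrow> xs \<noteq> [] \<Longrightarrow>
   int (length (filter isl xs)) - int (length (filter (\<lambda>x. \<not> isl x) xs)) =
   (if even (length xs) then 0 else if isl (hd xs) then 1 else -1)"
proof (induction xs)
  case Nil then show ?case by simp
next
  case (Cons x xs)
  show ?case
  proof (cases "xs = []")
    case True then show ?thesis by simp
  next
    case False
    have h: "\<forall>i. Suc i < length xs \<longrightarrow> isl (xs!i) \<noteq> isl (xs!Suc i)"
    proof (intro allI impI)
      fix i assume "Suc i < length xs"
      then show "isl (xs!i) \<noteq> isl (xs!Suc i)" using Cons.prems(1)[rule_format, of "Suc i"] by simp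
    qed
    have hd: "isl (hd xs) \<noteq> isl x"
      using Cons.prems(1)[rule_format, of 0] False by (cases xs) auto
    show ?thesis using Cons.IH[OF h False] hd by auto
  qed
qed

lemma alt_count:
  "(\<forall>i. Suc i < length xs \<longrightarrow> isl (xs!i) \<noteq> isl (xs!Suc i)) \<Longrightarrow>
   \<bar>int (length (filter isl xs)) - int (length (filter (\<lambda>x. \<not> isl x) xs))\<bar> \<le> 1"
  by (cases "xs = []") (auto simp: alt_count_aux)


lemma cycle_len4:
  fixes xs :: "('a + 'a) list"
  assumes po: "poset_on P le" and fr: "free_3_1 P le"
    and cC: "chain_of P le C" and cD: "chain_of P le D"
    and setH: "set xs = H" and dist: "distinct xs"
    and Hsub: "H \<subseteq> inc_vertices C D"
    and Hcl: "\<And>x y. x \<in> H \<Longrightarrow> inc_edge le C D x y \<Longrightarrow> y \<in> H"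
    and Hconn: "\<And>K. (\<And>x y. x \<in> K \<Longrightarrow> inc_edge le C D x y \<Longrightarrow> y \<in> K) \<Longrightarrow> K \<inter> H \<noteq> {} \<Longrightarrow> H \<subseteq> K"
    and len: "length xs \<ge> 3"
    and adj: "\<forall>i<length xs. \<forall>j<length xs. inc_edge le C D (xs!i) (xs!j) \<longleftrightarrow>
         (i = j+1 \<or> j = i+1 \<or> (i = 0 \<and> j = length xs - 1) \<or> (j = 0 \<and> i = length xs - 1))"
  shows "length xs = 4"
proof -
  define n where "n = length xs"
  define E where "E = inc_edge le C D"
  have adjn: "E (xs!i) (xs!j) \<longleftrightarrow> (i = j+1 \<or> j = i+1 \<or> (i = 0 \<and> j = n - 1) \<or> (j = 0 \<and> i = n - 1))"
    if "i < n" "j < n" for i j using adj that by (simp add: n_def E_def)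
  have n3: "n \<ge> 3" using len n_def by simp
  have deg: "a = b \<or> a = c \<or> b = c" if "E x a" "E x b" "E x c" for x a b c
    using inc_deg[OF po fr cC cD] that unfolding E_def by blast
  have two: "\<exists>a b. a \<noteq> b \<and> E x a \<and> E x b" if xH: "x \<in> H" for x
  proof -
    obtain i where i: "i < n" "x = xs!i" using xH setH by (auto simp: in_set_conv_nth n_def)
    have eqi: "xs!k = xs!l \<longleftrightarrow> k = l" if "k < n" "l < n" for k l
      using nth_eq_iff_index_eq[OF dist] that n_def by auto
    consider "i = 0" | "i = n - 1" | "0 < i" "i < n - 1" using i by linarith
    then show ?thesis
    proof cases
      case 1
      have "E x (xs!1)" "E x (xs!(n-1))" using adjn[of i 1] adjn[of i "n-1"] i 1 n3 by auto
      moreover have "xs!1 \<noteq> xs!(n-1)" using eqi[of 1 "n-1"] n3 by auto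
      ultimately show ?thesis by blast
    next
      case 2
      have "E x (xs!(n-2))" "E x (xs!0)" using adjn[of i "n-2"] adjn[of i 0] i 2 n3 by auto
      moreover have "xs!(n-2) \<noteq> xs!0" using eqi[of "n-2" 0] n3 by auto
      ultimately show ?thesis by blast
    next
      case 3
      have "E x (xs!(i-1))" "E x (xs!(i+1))" using adjn[of i "i-1"] adjn[of i "i+1"] i 3 n3 by auto
      moreover have "xs!(i-1) \<noteq> xs!(i+1)" using eqi[of "i-1" "i+1"] 3 by auto
      ultimately show ?thesis by blast
    qed
  qed
  have par: "isl (xs!i) = (isl (xs!0) = even i)" if "i < n" for i
    using that
  proof (induction i)
    case 0 then show ?case by simp
  next
    case (Suc i)
    have "E (xs!i) (xs!Suc i)" using adjn[of i "Suc i"] Suc.prems by auto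
    then have "isl (xs!i) \<noteq> isl (xs!Suc i)" unfolding E_def by (rule inc_edge_isl)
    then show ?case using Suc by auto
  qed
  have "E (xs!0) (xs!(n-1))" using adjn[of 0 "n-1"] n3 by auto
  then have "isl (xs!0) \<noteq> isl (xs!(n-1))" unfolding E_def by (rule inc_edge_isl)
  then have "odd (n - 1)" using par[of "n-1"] n3 by auto
  then have n4: "n \<ge> 4" using n3 by presburger
  have cardH: "card H = n" using distinct_card[OF dist] setH n_def by simp
  define Dp where "Dp = {d. Inr d \<in> H}"
  have DpD: "Dp \<subseteq> D" using Hsub by (auto simp: Dp_def inc_vertices_def)
  have DP: "D \<subseteq> P" "C \<subseteq> P" using cC cD by (auto simp: chain_of_def)
  have finDp: "finite Dp"
  proof -
    have "finite H" using setH by auto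
    then have "finite (Inr -` H :: 'a set)" by (rule finite_vimageI) (simp add: inj_on_def)
    moreover have "Dp = Inr -` H" by (auto simp: Dp_def)
    ultimately show ?thesis by simp
  qed
  have "\<not> isl (xs!0) \<or> \<not> isl (xs!1)" using par[of 1] n3 by auto
  moreover have "xs!0 \<in> H" "xs!1 \<in> H"
  proof -
    have "0 < length xs" "1 < length xs" using n3 n_def by auto
    then show "xs!0 \<in> H" "xs!1 \<in> H" using setH nth_mem by blast+
  qed
  ultimately obtain y where y: "y \<in> H" "\<not> isl y" by blast
  then have "projr y \<in> Dp" by (cases y) (auto simp: Dp_def)
  then have Dpne: "Dp \<noteq> {}" by auto
  have Dpch: "\<forall>x\<in>Dp. \<forall>y\<in>Dp. le x y \<or> le y x" using cD DpD by (auto simp: chain_of_def)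
  obtain d where d: "d \<in> Dp" and dmin: "\<forall>y\<in>Dp. le d y"
    using chain_min[OF finDp Dpne _ po Dpch] DpD DP by blast
  have dH: "Inr d \<in> H" using d by (simp add: Dp_def)
  obtain a b where ab: "a \<noteq> b" "E (Inr d) a" "E (Inr d) b" using two[OF dH] by blast
  then obtain c c' where cc: "a = Inl c" "b = Inl c'" "c \<in> C" "c' \<in> C" "d \<in> D" "sim le c d" "sim le c' d"
    unfolding E_def by (auto simp: inc_edge_Inr)
  have ccne: "c \<noteq> c'" using ab cc by auto
  have cH: "Inl c \<in> H" "Inl c' \<in> H" using Hcl dH ab cc unfolding E_def by auto
  have other: "\<exists>e. e \<noteq> d \<and> e \<in> D \<and> sim le z e \<and> E (Inl z) (Inr e)" if zH: "Inl z \<in> H" for z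
  proof -
    obtain p q where pq: "p \<noteq> q" "E (Inl z) p" "E (Inl z) q" using two[OF zH] by blast
    then obtain p' q' where "p = Inr p'" "q = Inr q'" "p' \<in> D" "q' \<in> D" "sim le z p'" "sim le z q'"
      unfolding E_def by (auto simp: inc_edge_Inl)
    then show ?thesis using pq by metis
  qed
  obtain e where e: "e \<noteq> d" "e \<in> D" "sim le c e" "E (Inl c) (Inr e)" using other[OF cH(1)] by blast
  obtain e' where e': "e' \<noteq> d" "e' \<in> D" "sim le c' e'" "E (Inl c') (Inr e')" using other[OF cH(2)] by blast
  have Ecd: "E (Inl c) (Inr d)" "E (Inl c') (Inr d)" using cc unfolding E_def by (auto simp: inc_edge_Inl)
  have nbc: "y = Inr d \<or> y = Inr e" if "E (Inl c) y" for y
    using deg[OF Ecd(1) e(4) that] e(1) by auto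
  have nbc': "y = Inr d \<or> y = Inr e'" if "E (Inl c') y" for y
    using deg[OF Ecd(2) e'(4) that] e'(1) by auto
  have eH: "Inr e \<in> H" "Inr e' \<in> H" using Hcl cH e(4) e'(4) unfolding E_def by auto
  have de: "le d e" "le d e'" using dmin eH by (auto simp: Dp_def)
  have icd: "incomparable le c d" using sim_chain[OF cD cc(5) e(2) e(1)[symmetric] cc(6) e(3)] .
  have ic'd: "incomparable le c' d" using sim_chain[OF cD cc(5) e'(2) e'(1)[symmetric] cc(7) e'(3)] .
  have ice: "incomparable le c e" using sim_chain[OF cD e(2) cc(5) e(1) e(3) cc(6)] .
  have ic'e': "incomparable le c' e'" using sim_chain[OF cD e'(2) cc(5) e'(1) e'(3) cc(7)] .
  show ?thesis
  proof (cases "e = e'")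
    case True
    define K where "K = {Inl c, Inl c', Inr d, Inr e}"
    have "H \<subseteq> K"
    proof (rule Hconn)
      fix x y assume xK: "x \<in> K" and xy: "inc_edge le C D x y"
      then have xy': "E x y" by (simp add: E_def)
      have Ede: "E (Inr d) (Inl c)" "E (Inr d) (Inl c')" "E (Inr e) (Inl c)" "E (Inr e) (Inl c')"
        using Ecd e(4) e'(4) True unfolding E_def by (auto intro: inc_edge_sym)
      have "x = Inl c \<or> x = Inl c' \<or> x = Inr d \<or> x = Inr e" using xK K_def by auto
      then consider "x = Inl c" | "x = Inl c'" | "x = Inr d" | "x = Inr e" by blast
      then show "y \<in> K"
      proof cases
        case 1 then show ?thesis using nbc xy' K_def by auto
      next
        case 2 then show ?thesis using nbc' xy' K_def True by auto
      next
        case 3 then show ?thesis using deg[OF Ede(1) Ede(2), of y] xy' ccne K_def by auto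
      next
        case 4 then show ?thesis using deg[OF Ede(3) Ede(4), of y] xy' ccne K_def by auto
      qed
    next
      show "K \<inter> H \<noteq> {}" using dH K_def by auto
    qed
    then have "card H \<le> card K" by (simp add: card_mono K_def)
    also have "card K \<le> 4" unfolding K_def by (auto intro: card_insert_le_m1 simp: card_insert_if)
    finally show ?thesis using cardH n4 n_def by simp
  next
    case False
    have "\<not> E (Inl c) (Inr e')" using nbc e'(1) False by auto
    then have nce': "\<not> sim le c e'" using cc e' unfolding E_def by (auto simp: inc_edge_Inl)
    have "\<not> E (Inl c') (Inr e)" using nbc' e(1) False by auto
    then have nc'e: "\<not> sim le c' e" using cc e unfolding E_def by (auto simp: inc_edge_Inl)
    have cmp: "le c c' \<or> le c' c" using cC cc by (auto simp: chain_of_def)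
    have trans: "\<And>x y z. x \<in> P \<Longrightarrow> y \<in> P \<Longrightarrow> z \<in> P \<Longrightarrow> le x y \<Longrightarrow> le y z \<Longrightarrow> le x z"
      using po unfolding poset_on_def by blast
    have mem: "c \<in> P" "c' \<in> P" "d \<in> P" "e \<in> P" "e' \<in> P" using DP cc e e' by auto
    have ce': "le c e'" using nce' icd de(2) trans[of e' c] trans[of d e' c] mem
      unfolding sim_def incomparable_def by blast
    have c'e: "le c' e" using nc'e ic'd de(1) trans[of d e c'] mem
      unfolding sim_def incomparable_def by blast
    show ?thesis using cmp ce' c'e ice ic'e' trans[of c c' e] trans[of c' c e'] mem
      unfolding incomparable_def by blast
  qed
qed


lemma idx4: "(i = j+1 \<or> j = i+1 \<or> (i = 0 \<and> j = 3) \<or> (j = 0 \<and> i = 3)) \<longleftrightarrow>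
        (j = (i + 1) mod 4 \<or> i = (j + 1) mod 4)" if "i < (4::nat)" "j < 4" for i j
proof -
  have "i = 0 \<or> i = 1 \<or> i = 2 \<or> i = 3" "j = 0 \<or> j = 1 \<or> j = 2 \<or> j = 3" using that by arith+
  then show ?thesis by (elim disjE) simp_all
qed

theorem mainTheorem13:
  fixes P :: "'a set" and le :: "'a \<Rightarrow> 'a \<Rightarrow> bool"
    and C D :: "'a set" and H :: "('a + 'a) set"
  assumes "finite P" and "poset_on P le" and "free_3_1 P le"
    and "chain_of P le C" and "chain_of P le D"
    and "ladder le C D H"
  shows "(is_4cycle H (inc_edge le C D) \<or> is_path_graph H (inc_edge le C D)) \<and>
         \<bar>int (card (H \<inter> Inl ` C)) - int (card (H \<inter> Inr ` D))\<bar> \<le> 1"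
proof -
  note finP = assms(1) and po = assms(2) and fr = assms(3) and cC = assms(4) and cD = assms(5)
  obtain v where v: "v \<in> inc_vertices C D"
    and Hdef: "H = {w. (v, w) \<in> {(x, y). inc_edge le C D x y}\<^sup>*}"
    using assms(6) unfolding ladder_def by blast
  have CP: "C \<subseteq> P" "D \<subseteq> P" using cC cD by (auto simp: chain_of_def)
  have finV: "finite (inc_vertices C D)"
    using finite_subset[OF CP(1) finP] finite_subset[OF CP(2) finP] by (simp add: inc_vertices_def)
  have Vcl: "y \<in> inc_vertices C D" if "x \<in> inc_vertices C D" "inc_edge le C D x y" for x y
    using that(2) unfolding inc_edge_def inc_vertices_def by auto
  have Hsub: "H \<subseteq> inc_vertices C D"
    using closed_reach[of "inc_vertices C D" "inc_edge le C D" v] Vcl v Hdef by blast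
  have finH: "finite H" using finite_subset[OF Hsub finV] .
  have Hcl: "y \<in> H" if "x \<in> H" "inc_edge le C D x y" for x y
    using that unfolding Hdef by (auto intro: rtrancl_into_rtrancl)
  have Hconn: "H \<subseteq> K" if Kcl: "\<And>x y. x \<in> K \<Longrightarrow> inc_edge le C D x y \<Longrightarrow> y \<in> K"
    and KH: "K \<inter> H \<noteq> {}" for K
  proof -
    obtain z where z: "z \<in> K" "z \<in> H" using KH by blast
    have "(v, z) \<in> {(x, y). inc_edge le C D x y}\<^sup>*" using z(2) Hdef by simp
    then have "(z, v) \<in> {(x, y). inc_edge le C D x y}\<^sup>*"
      using reach_sym[of "inc_edge le C D"] inc_edge_sym by blast
    then have "v \<in> K" using closed_reach[of K "inc_edge le C D" z v] Kcl z(1) by blast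
    then show ?thesis unfolding Hdef using closed_reach[of K "inc_edge le C D" v] Kcl by blast
  qed
  have degE: "a = b \<or> a = c \<or> b = c" if "inc_edge le C D x a" "inc_edge le C D x b" "inc_edge le C D x c" for x a b c
    using inc_deg[OF po fr cC cD that] .
  obtain xs where xsP: "xs \<noteq> [] \<and> distinct xs \<and> set xs = H \<and>
     (\<forall>i. Suc i < length xs \<longrightarrow> inc_edge le C D (xs!i) (xs!Suc i)) \<and>
     ((\<forall>i<length xs. \<forall>j<length xs. inc_edge le C D (xs!i) (xs!j) \<longleftrightarrow> (i = j+1 \<or> j = i+1)) \<or>
      (length xs \<ge> 3 \<and> (\<forall>i<length xs. \<forall>j<length xs. inc_edge le C D (xs!i) (xs!j) \<longleftrightarrow>
         (i = j+1 \<or> j = i+1 \<or> (i = 0 \<and> j = length xs - 1) \<or> (j = 0 \<and> i = length xs - 1)))))"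
    using path_or_cycle[OF finH Hdef inc_edge_sym inc_edge_irr degE] by (rule exE)
  note ne = xsP[THEN conjunct1]
  note dist = xsP[THEN conjunct2, THEN conjunct1]
  note setH = xsP[THEN conjunct2, THEN conjunct2, THEN conjunct1]
  note step = xsP[THEN conjunct2, THEN conjunct2, THEN conjunct2, THEN conjunct1]
  note shape = xsP[THEN conjunct2, THEN conjunct2, THEN conjunct2, THEN conjunct2]
  have part1: "is_4cycle H (inc_edge le C D) \<or> is_path_graph H (inc_edge le C D)"
    using shape
  proof
    assume "\<forall>i<length xs. \<forall>j<length xs. inc_edge le C D (xs!i) (xs!j) \<longleftrightarrow> (i = j+1 \<or> j = i+1)"
    then have "is_path_graph H (inc_edge le C D)" unfolding is_path_graph_def using ne dist setH
      by (intro exI[of _ xs] conjI)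
    then show ?thesis by blast
  next
    assume cyc: "length xs \<ge> 3 \<and> (\<forall>i<length xs. \<forall>j<length xs. inc_edge le C D (xs!i) (xs!j) \<longleftrightarrow>
         (i = j+1 \<or> j = i+1 \<or> (i = 0 \<and> j = length xs - 1) \<or> (j = 0 \<and> i = length xs - 1)))"
    have l4: "length xs = 4"
    proof (rule cycle_len4[OF po fr cC cD setH dist Hsub])
      show "\<And>x y. x \<in> H \<Longrightarrow> inc_edge le C D x y \<Longrightarrow> y \<in> H" by (rule Hcl)
      show "\<And>K. (\<And>x y. x \<in> K \<Longrightarrow> inc_edge le C D x y \<Longrightarrow> y \<in> K) \<Longrightarrow> K \<inter> H \<noteq> {} \<Longrightarrow> H \<subseteq> K"
        by (rule Hconn)
    qed (use cyc in blast)+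
    have "\<forall>i<4. \<forall>j<4. inc_edge le C D (xs!i) (xs!j) \<longleftrightarrow> (j = (i + 1) mod 4 \<or> i = (j + 1) mod 4)"
    proof (intro allI impI)
      fix i j :: nat assume ij: "i < 4" "j < 4"
      show "inc_edge le C D (xs!i) (xs!j) \<longleftrightarrow> (j = (i + 1) mod 4 \<or> i = (j + 1) mod 4)"
      proof -
        have ijl: "i < length xs" "j < length xs" using ij l4 by auto
        have "inc_edge le C D (xs!i) (xs!j) \<longleftrightarrow> (i = j+1 \<or> j = i+1 \<or> (i = 0 \<and> j = length xs - 1) \<or> (j = 0 \<and> i = length xs - 1))"
          using conjunct2[OF cyc, rule_format, OF ijl] .
        then show ?thesis using idx4[OF ij] l4 by simp
      qed
    qed
    then have "is_4cycle H (inc_edge le C D)" unfolding is_4cycle_def using l4 dist setH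
      by (intro exI[of _ xs] conjI)
    then show ?thesis by blast
  qed
  have alt: "\<forall>i. Suc i < length xs \<longrightarrow> isl (xs!i) \<noteq> isl (xs!Suc i)"
    using step inc_edge_isl by blast
  have s1: "H \<inter> Inl ` C = set (filter isl xs)"
    using Hsub setH unfolding inc_vertices_def by auto
  have s2: "H \<inter> Inr ` D = set (filter (\<lambda>x. \<not> isl x) xs)"
    using Hsub setH unfolding inc_vertices_def by auto
  have c1: "card (H \<inter> Inl ` C) = length (filter isl xs)"
    unfolding s1 by (rule distinct_card) (simp add: dist)
  have c2: "card (H \<inter> Inr ` D) = length (filter (\<lambda>x. \<not> isl x) xs)"
    unfolding s2 by (rule distinct_card) (simp add: dist)
  show ?thesis using part1 alt_count[OF alt] c1 c2 by simp
qed

end
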